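(* Let $a<b$, let $I_n: a=x_0<x_1<\cdots<x_{n-1}<x_n=b$ be a partition of $[a,b]$, and let $h_i=x_{i+1}-x_i$ for $i=0,\dots,n-1$. Let $f:[a,b]\rightarrow\mathbb{R}$ be a differentiable mapping in $(a,b)$ such that $f'\in L^1[a,b]$ and $\gamma\le f'(x)\le \Gamma$ for all $x\in [a,b]$, where $\gamma,\Gamma$ are real constants. Define \[ S(f,I_n)=\frac{1}{2}\sum_{i=0}^{n-1}\left[f\left(\frac{3x_i+x_{i+1}}{4}\right)+f\left(\frac{x_i+3x_{i+1}}{4}\right)\right]h_i \] and $R(f,I_n)=\int_a^b f(x)\,dx-S(f,I_n)$, and let $S_i=\frac{f(x_{i+1})-f(x_i)}{h_i}$ for $i=0,\dots,n-1$. Then \[ |R(f,I_n)|\leq\frac{1}{4}\sum_{i=0}^{n-1}(S_i-\gamma)h_i^2 \qquad\text{and}\qquad |R(f,I_n)|\leq\frac{1}{4}\sum_{i=0}^{n-1}(\Gamma-S_i)h_i^2. \] *)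

theory Defs
  imports "HOL-Analysis.Analysis"
begin

definition quad_sum :: "(real \<Rightarrow> real) \<Rightarrow> (nat \<Rightarrow> real) \<Rightarrow> nat \<Rightarrow> real" where
  "quad_sum f x n = (1/2) * (\<Sum>i<n. (f ((3 * x i + x (Suc i)) / 4) + f ((x i + 3 * x (Suc i)) / 4))
                                     * (x (Suc i) - x i))"

definition quad_rem :: "(real \<Rightarrow> real) \<Rightarrow> real \<Rightarrow> real \<Rightarrow> (nat \<Rightarrow> real) \<Rightarrow> nat \<Rightarrow> real" where
  "quad_rem f a b x n = integral {a..b} f - quad_sum f x n"

definition slope :: "(real \<Rightarrow> real) \<Rightarrow> (nat \<Rightarrow> real) \<Rightarrow> nat \<Rightarrow> real" where
  "slope f x i = (f (x (Suc i)) - f (x i)) / (x (Suc i) - x i)"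

end

theory Submission
  imports Defs
begin

lemma piece_bounds:
  fixes g :: "real \<Rightarrow> real"
  assumes "u \<le> v" "continuous_on {u..v} g" "\<And>t. u \<le> t \<Longrightarrow> t \<le> v \<Longrightarrow> g u \<le> g t \<and> g t \<le> g v"
  shows "(v-u) * g u \<le> integral {u..v} g \<and> integral {u..v} g \<le> (v-u) * g v"
proof -
  have gi: "g integrable_on {u..v}" using assms(2) by (rule integrable_continuous_interval)
  have "integral {u..v} (\<lambda>_. g u) \<le> integral {u..v} g"
    by (rule integral_le) (use gi assms(3) in auto)
  moreover have "integral {u..v} g \<le> integral {u..v} (\<lambda>_. g v)"
    by (rule integral_le) (use gi assms(3) in auto)
  ultimately show ?thesis using assms(1) by simp
qed

lemma core:
  fixes g :: "real \<Rightarrow> real"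
  assumes "c < d" "continuous_on {c..d} g" "\<And>s t. c \<le> s \<Longrightarrow> s \<le> t \<Longrightarrow> t \<le> d \<Longrightarrow> g s \<le> g t"
  shows "\<bar>integral {c..d} g - (d-c)/2*(g((3*c+d)/4) + g((c+3*d)/4))\<bar> \<le> (d-c)/4*(g d - g c)"
proof -
  define h where "h = (d-c)/4"
  define p1 where "p1 = (3*c+d)/4"
  define m where "m = (c+d)/2"
  define p3 where "p3 = (c+3*d)/4"
  have h: "h > 0" "p1 - c = h" "m - p1 = h" "p3 - m = h" "d - p3 = h"
    using assms(1) unfolding h_def p1_def m_def p3_def by (auto simp: field_simps)
  have ord: "c \<le> p1" "p1 \<le> m" "m \<le> p3" "p3 \<le> d" using h by auto
  have pb: "(v-u) * g u \<le> integral {u..v} g \<and> integral {u..v} g \<le> (v-u) * g v"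
    if "c \<le> u" "u \<le> v" "v \<le> d" for u v
    apply (rule piece_bounds[OF that(2)])
    using continuous_on_subset[OF assms(2)] that apply auto[1]
    using assms(3) that by auto
  have gi: "g integrable_on {c..d}" using assms(2) by (rule integrable_continuous_interval)
  have gi2: "g integrable_on {p1..d}" "g integrable_on {m..d}"
    using ord by (auto intro!: integrable_continuous_interval continuous_on_subset[OF assms(2)])
  have split: "integral {c..d} g = integral {c..p1} g + integral {p1..m} g + integral {m..p3} g + integral {p3..d} g"
    using Henstock_Kurzweil_Integration.integral_combine[OF ord(1) _ gi] Henstock_Kurzweil_Integration.integral_combine[OF ord(2) _ gi2(1)]
      Henstock_Kurzweil_Integration.integral_combine[OF ord(3) ord(4) gi2(2)] ord by linarith
  have b1: "h * g c \<le> integral {c..p1} g \<and> integral {c..p1} g \<le> h * g p1" using pb[of c p1] ord h by auto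
  have b2: "h * g p1 \<le> integral {p1..m} g \<and> integral {p1..m} g \<le> h * g m" using pb[of p1 m] ord h by auto
  have b3: "h * g m \<le> integral {m..p3} g \<and> integral {m..p3} g \<le> h * g p3" using pb[of m p3] ord h by auto
  have b4: "h * g p3 \<le> integral {p3..d} g \<and> integral {p3..d} g \<le> h * g d" using pb[of p3 d] ord h by auto
  have mo: "h * g c \<le> h * g p1" "h * g p1 \<le> h * g m" "h * g m \<le> h * g p3" "h * g p3 \<le> h * g d"
    using assms(3) ord h(1) by (auto intro!: mult_left_mono)
  have e1: "(d-c)/2*(g p1 + g p3) = 2*(h*g p1) + 2*(h * g p3)" by (simp add: h_def field_simps)
  have e2: "(d-c)/4*(g d - g c) = h * g d - h * g c" by (simp add: h_def right_diff_distrib)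
  show ?thesis unfolding p1_def[symmetric] p3_def[symmetric] e1 e2 split
    using b1 b2 b3 b4 mo by linarith
qed


lemma local_f:
  fixes f :: "real \<Rightarrow> real"
  assumes "c < d" "continuous_on {c..d} f"
    "\<And>s t. c \<le> s \<Longrightarrow> s \<le> t \<Longrightarrow> t \<le> d \<Longrightarrow> f s - k * s \<le> f t - k*t"
  shows "\<bar>integral {c..d} f - (1/2)*((f ((3*c+d)/4) + f ((c+3*d)/4))*(d-c))\<bar>
          \<le> (1/4)*(((f d - f c)/(d-c) - k)*(d-c)^2)"
proof -
  define g where "g = (\<lambda>t. f t - k*t)"
  have gc: "continuous_on {c..d} g" unfolding g_def
    by (intro continuous_intros assms(2))
  have C: "\<bar>integral {c..d} g - (d-c)/2*(g((3*c+d)/4) + g((c+3*d)/4))\<bar> \<le> (d-c)/4*(g d - g c)"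
    by (rule core[OF assms(1) gc]) (use assms(3) in \<open>auto simp: g_def\<close>)
  have fi: "(f has_integral integral {c..d} f) {c..d}"
    using integrable_continuous_interval[OF assms(2)] by (simp add: has_integral_integral)
  have li: "((\<lambda>t. k*t) has_integral k*((d^2-c^2)/2)) {c..d}"
    using has_integral_mult_right[OF ident_has_integral[of c d]] assms(1) by simp
  have "integral {c..d} g = integral {c..d} f - k*((d^2-c^2)/2)"
    unfolding g_def by (rule integral_unique, rule has_integral_diff[OF fi li])
  then have E: "integral {c..d} g - (d-c)/2*(g((3*c+d)/4) + g((c+3*d)/4))
      = integral {c..d} f - (1/2)*((f ((3*c+d)/4) + f ((c+3*d)/4))*(d-c))"
    unfolding g_def by (simp add: power2_eq_square field_simps)
  have R: "(d-c)/4*(g d - g c) = (1/4)*(((f d - f c)/(d-c) - k)*(d-c)^2)"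
    unfolding g_def using assms(1) by (simp add: power2_eq_square field_simps)
  show ?thesis using C unfolding E R .
qed

theorem theorem3p1:
  fixes f f' :: "real \<Rightarrow> real" and a b \<gamma> \<Gamma> :: real and x :: "nat \<Rightarrow> real" and n :: nat
  assumes "a < b" and "n \<ge> 1"
    and "x 0 = a" and "x n = b" and "\<And>i. i < n \<Longrightarrow> x i < x (Suc i)"
    and "continuous_on {a..b} f"
    and "\<And>t. t \<in> {a<..<b} \<Longrightarrow> (f has_real_derivative f' t) (at t)"
    and "f' absolutely_integrable_on {a..b}"
    and "\<And>t. t \<in> {a..b} \<Longrightarrow> \<gamma> \<le> f' t \<and> f' t \<le> \<Gamma>"
  shows "\<bar>quad_rem f a b x n\<bar> \<le> (1/4) * (\<Sum>i<n. (slope f x i - \<gamma>) * (x (Suc i) - x i)^2) \<and>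
         \<bar>quad_rem f a b x n\<bar> \<le> (1/4) * (\<Sum>i<n. (\<Gamma> - slope f x i) * (x (Suc i) - x i)^2)"
proof -
  have xmono: "\<forall>i\<le>j. x i \<le> x j" if "j \<le> n" for j
    using that
  proof (induction j)
    case 0 then show ?case by auto
  next
    case (Suc j)
    then have "x j \<le> x (Suc j)" using assms(5)[of j] by auto
    with Suc show ?case by (auto simp: le_Suc_eq)
  qed
  have xin: "a \<le> x i \<and> x i \<le> b" if "i \<le> n" for i
    using xmono[OF that] xmono[of n] that assms(3,4) by auto
  have fsub: "continuous_on {u..v} f" if "a \<le> u" "v \<le> b" for u v
    using continuous_on_subset[OF assms(6)] that by auto
  have inc1: "f s - \<gamma> * s \<le> f t - \<gamma>*t" if "a \<le> s" "s \<le> t" "t \<le> b" for s t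
  proof (rule DERIV_nonneg_imp_increasing_open[OF that(2)])
    fix y assume y: "s < y" "y < t"
    have "((\<lambda>t. f t - \<gamma>*t) has_real_derivative f' y - \<gamma>*1) (at y)"
      using y that by (intro derivative_intros assms(7)) auto
    moreover have "f' y - \<gamma>*1 \<ge> 0" using assms(9)[of y] y that by auto
    ultimately show "\<exists>z. ((\<lambda>t. f t - \<gamma>*t) has_real_derivative z) (at y) \<and> z \<ge> 0" by blast
  next
    show "continuous_on {s..t} (\<lambda>t. f t - \<gamma>*t)"
      using fsub[of s t] that by (intro continuous_intros) auto
  qed
  have inc2: "(-f s) - (-\<Gamma>) * s \<le> (-f t) - (-\<Gamma>)*t" if "a \<le> s" "s \<le> t" "t \<le> b" for s t
  proof (rule DERIV_nonneg_imp_increasing_open[OF that(2), where f="\<lambda>t. (-f t) - (-\<Gamma>)*t"])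
    fix y assume y: "s < y" "y < t"
    have "((\<lambda>t. (-f t) - (-\<Gamma>)*t) has_real_derivative (- f' y) - (-\<Gamma>)*1) (at y)"
      using y that by (auto intro!: derivative_eq_intros assms(7))
    moreover have "(- f' y) - (-\<Gamma>)*1 \<ge> 0" using assms(9)[of y] y that by auto
    ultimately show "\<exists>z. ((\<lambda>t. (-f t) - (-\<Gamma>)*t) has_real_derivative z) (at y) \<and> z \<ge> 0" by blast
  next
    show "continuous_on {s..t} (\<lambda>t. (-f t) - (-\<Gamma>)*t)"
      using fsub[of s t] that by (intro continuous_intros) auto
  qed
  define E where "E i = integral {x i..x (Suc i)} f
     - (1/2)*((f ((3 * x i + x (Suc i)) / 4) + f ((x i + 3 * x (Suc i)) / 4)) * (x (Suc i) - x i))" for i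
  have splitint: "integral {a..x k} f = (\<Sum>i<k. integral {x i..x (Suc i)} f)" if "k \<le> n" for k
    using that
  proof (induction k)
    case 0 then show ?case using assms(3) by simp
  next
    case (Suc k)
    have "integral {a..x k} f + integral {x k..x (Suc k)} f = integral {a..x (Suc k)} f"
      apply (rule Henstock_Kurzweil_Integration.integral_combine)
      using xin[of k] xin[of "Suc k"] Suc.prems assms(5)[of k]
      by (auto intro!: integrable_continuous_interval fsub)
    then show ?case using Suc by simp
  qed
  have qr: "quad_rem f a b x n = (\<Sum>i<n. E i)"
    unfolding quad_rem_def quad_sum_def E_def sum_subtractf sum_distrib_left
    using splitint[of n] assms(4) by simp
  have loc: "\<bar>E i\<bar> \<le> (1/4)*((slope f x i - \<gamma>) * (x (Suc i) - x i)^2) \<and>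
             \<bar>E i\<bar> \<le> (1/4)*((\<Gamma> - slope f x i) * (x (Suc i) - x i)^2)" if "i < n" for i
  proof -
    have lt: "x i < x (Suc i)" using assms(5) that .
    have ab: "a \<le> x i" "x (Suc i) \<le> b" using xin[of i] xin[of "Suc i"] that by auto
    have A: "\<bar>E i\<bar> \<le> (1/4)*((slope f x i - \<gamma>) * (x (Suc i) - x i)^2)"
      unfolding E_def slope_def
      by (rule local_f[OF lt fsub[OF ab]]) (use inc1 ab in auto)
    have B0: "\<bar>integral {x i..x (Suc i)} (\<lambda>t. - f t) - (1/2)*(((- f ((3 * x i + x (Suc i)) / 4))
        + (- f ((x i + 3 * x (Suc i)) / 4))) * (x (Suc i) - x i))\<bar>
        \<le> (1/4)*((((- f (x (Suc i))) - (- f (x i)))/(x (Suc i) - x i) - (-\<Gamma>))*(x (Suc i) - x i)^2)"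
      by (rule local_f[OF lt]) (use inc2 ab fsub[OF ab] in \<open>auto intro: continuous_intros\<close>)
    have B1: "integral {x i..x (Suc i)} (\<lambda>t. - f t) = - integral {x i..x (Suc i)} f"
      by (rule integral_neg)
    have B2: "((- f (x (Suc i))) - (- f (x i)))/(x (Suc i) - x i) - (-\<Gamma>) = \<Gamma> - slope f x i"
      using lt unfolding slope_def by (simp add: field_simps)
    have "\<bar>E i\<bar> = \<bar>integral {x i..x (Suc i)} (\<lambda>t. - f t) - (1/2)*(((- f ((3 * x i + x (Suc i)) / 4))
        + (- f ((x i + 3 * x (Suc i)) / 4))) * (x (Suc i) - x i))\<bar>"
      unfolding B1 E_def by (simp add: algebra_simps)
    with B0 B2 have B: "\<bar>E i\<bar> \<le> (1/4)*((\<Gamma> - slope f x i) * (x (Suc i) - x i)^2)" by simp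
    from A B show ?thesis ..
  qed
  have "\<bar>quad_rem f a b x n\<bar> \<le> (\<Sum>i<n. \<bar>E i\<bar>)" unfolding qr by (rule sum_abs)
  moreover have "(\<Sum>i<n. \<bar>E i\<bar>) \<le> (\<Sum>i<n. (1/4)*((slope f x i - \<gamma>) * (x (Suc i) - x i)^2))"
    by (rule sum_mono) (use loc in auto)
  moreover have "(\<Sum>i<n. \<bar>E i\<bar>) \<le> (\<Sum>i<n. (1/4)*((\<Gamma> - slope f x i) * (x (Suc i) - x i)^2))"
    by (rule sum_mono) (use loc in auto)
  ultimately show ?thesis unfolding sum_distrib_left[symmetric] by linarith
qed

end
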